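(* Let $\lambda$ be an infinite cardinal. (1) There is a map $d:\mathrm{cf}(\lambda)\times\lambda^+\to\lambda$ such that $E^{\lambda^+}_{<\mathrm{cf}(\lambda)}\subseteq A(d)$. (2) If $\mathrm{ADS}_\lambda$ holds, then there is a map $d:\mathrm{cf}(\lambda)\times\lambda^+\to\lambda$ such that $E^{\lambda^+}_{\neq\mathrm{cf}(\lambda)}\subseteq A(d)$. (3) If $\lambda$ is singular and $\vec f=\langle f_\beta\mid\beta<\lambda^+\rangle$ is a scale for $\lambda$, then there is a map $d:\mathrm{cf}(\lambda)\times\lambda^+\to\lambda$ such that $G(\vec f)\subseteq A(d)$. (4) If $(\aleph_{\omega+1},\aleph_\omega)\twoheadrightarrow(\aleph_1,\aleph_0)$ holds, then for every map $d:\aleph_0\times\aleph_{\omega+1}\to\aleph_\omega$, the set $E^{\aleph_{\omega+1}}_{\aleph_1}\setminus A(d)$ is stationary.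
   Context: $E^\kappa_{<\mu}$, $E^\kappa_{\neq\mu}$, $E^\kappa_\mu$ denote the sets of $\alpha<\kappa$ with cofinality $<\mu$, $\neq\mu$, $=\mu$ respectively. For an ordinal $\delta$, a regular uncountable $\kappa$ and a map $d:\delta\times\kappa\to\lambda$, $A(d)$ is the set of all $\alpha<\kappa$ such that for every cofinal $B\subseteq\alpha$ there exist $\eta\in\delta\cap\alpha$ and a cofinal $B'\subseteq B$ on which $\beta\mapsto d(\eta,\beta)$ is injective. $\mathrm{ADS}_\lambda$ asserts the existence of a sequence $\langle A_\beta\mid\beta<\lambda^+\rangle$ of cofinal subsets of $\lambda$ such that for every $\alpha<\lambda^+$ there is $f_\alpha:\alpha\to\lambda$ with $\langle A_\beta\setminus f_\alpha(\beta)\mid\beta<\alpha\rangle$ pairwise disjoint. For singular $\lambda$, a scale is a sequence $\langle f_\beta\mid\beta<\lambda^+\rangle$ in $\prod_{i<\mathrm{cf}(\lambda)}\lambda_i$, for some increasing sequence of regular cardinals $\langle\lambda_i\mid i<\mathrm{cf}(\lambda)\rangle$ cofinal in $\lambda$, which is increasing and cofinal modulo the ideal of bounded subsets of $\mathrm{cf}(\lambda)$. $G(\vec f)$ is the set of all $\alpha\in E^{\lambda^+}_{\neq\mathrm{cf}(\lambda)}$ for which there are a cofinal $A\subseteq\alpha$ and $i<\mathrm{cf}(\lambda)$ such that $f_\gamma(j)<f_\delta(j)$ for all $\gamma<\delta$ in $A$ and all $j\in[i,\mathrm{cf}(\lambda))$. $(\aleph_{\omega+1},\aleph_\omega)\twoheadrightarrow(\aleph_1,\aleph_0)$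 is Chang's conjecture: every structure on $\aleph_{\omega+1}$ in a countable language has an elementary substructure of size $\aleph_1$ whose intersection with $\aleph_\omega$ is countable. *)

theory Defs
  imports Main "HOL-Library.Equipollence" "HOL-Library.Countable_Set"
begin

text \<open>Ordinals are modelled as the elements of an arbitrary well-ordered type 'o.
  An element a stands for the ordinal given by its set of predecessors seg a.\<close>

definition seg :: "'o::wellorder \<Rightarrow> 'o set" where
  "seg a = {x. x < a}"

definition cofinal_in :: "'o::wellorder set \<Rightarrow> 'o \<Rightarrow> bool" where
  "cofinal_in B a \<longleftrightarrow> B \<subseteq> seg a \<and> (\<forall>x<a. \<exists>y\<in>B. x \<le> y)"

definition is_limit :: "'o::wellorder \<Rightarrow> bool" where
  "is_limit a \<longleftrightarrow> (\<exists>x. x < a) \<and> (\<forall>x<a. \<exists>y<a. x < y)"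

definition cf :: "'o::wellorder \<Rightarrow> 'o" where
  "cf a = (LEAST c. \<exists>B. cofinal_in B a \<and> B \<approx> seg c)"

definition is_card :: "'o::wellorder \<Rightarrow> bool" where
  "is_card a \<longleftrightarrow> (\<forall>b<a. \<not> seg b \<approx> seg a)"

definition inf_card :: "'o::wellorder \<Rightarrow> bool" where
  "inf_card a \<longleftrightarrow> is_card a \<and> infinite (seg a)"

definition regular_card :: "'o::wellorder \<Rightarrow> bool" where
  "regular_card a \<longleftrightarrow> inf_card a \<and> cf a = a"

definition singular_card :: "'o::wellorder \<Rightarrow> bool" where
  "singular_card a \<longleftrightarrow> inf_card a \<and> cf a \<noteq> a"

definition is_csucc :: "'o::wellorder \<Rightarrow> 'o \<Rightarrow> bool" where
  "is_csucc l k \<longleftrightarrow> seg l \<prec> seg k \<and> (\<forall>c<k. seg c \<lesssim> seg l)"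

definition is_omega :: "'o::wellorder \<Rightarrow> bool" where
  "is_omega w \<longleftrightarrow> infinite (seg w) \<and> (\<forall>c<w. finite (seg c))"

definition is_aleph_omega :: "'o::wellorder \<Rightarrow> bool" where
  "is_aleph_omega m \<longleftrightarrow> infinite {b. b < m \<and> inf_card b}
     \<and> (\<forall>c<m. finite {b. b < c \<and> inf_card b})"

definition E_less :: "'o::wellorder \<Rightarrow> 'o \<Rightarrow> 'o set" where
  "E_less k m = {a. a < k \<and> is_limit a \<and> cf a < m}"

definition E_neq :: "'o::wellorder \<Rightarrow> 'o \<Rightarrow> 'o set" where
  "E_neq k m = {a. a < k \<and> is_limit a \<and> cf a \<noteq> m}"

definition E_eq :: "'o::wellorder \<Rightarrow> 'o \<Rightarrow> 'o set" where
  "E_eq k m = {a. a < k \<and> is_limit a \<and> cf a = m}"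

definition is_map :: "('o::wellorder \<Rightarrow> 'o \<Rightarrow> 'o) \<Rightarrow> 'o \<Rightarrow> 'o \<Rightarrow> 'o \<Rightarrow> bool" where
  "is_map d delta k l \<longleftrightarrow> (\<forall>\<eta><delta. \<forall>\<beta><k. d \<eta> \<beta> < l)"

definition A_set :: "'o::wellorder \<Rightarrow> 'o \<Rightarrow> ('o \<Rightarrow> 'o \<Rightarrow> 'o) \<Rightarrow> 'o set" where
  "A_set delta k d = {a. a < k \<and> (\<forall>B. cofinal_in B a \<longrightarrow>
      (\<exists>\<eta>. \<eta> < delta \<and> \<eta> < a \<and> (\<exists>B'\<subseteq>B. cofinal_in B' a \<and> inj_on (d \<eta>) B')))}"

text \<open>ADS_l, where k = l^+.\<close>
definition ADS :: "'o::wellorder \<Rightarrow> 'o \<Rightarrow> bool" where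
  "ADS l k \<longleftrightarrow> (\<exists>A :: 'o \<Rightarrow> 'o set. (\<forall>\<beta><k. cofinal_in (A \<beta>) l) \<and>
     (\<forall>a<k. \<exists>f :: 'o \<Rightarrow> 'o. (\<forall>\<beta><a. f \<beta> < l) \<and>
        (\<forall>\<beta><a. \<forall>\<gamma><a. \<beta> \<noteq> \<gamma> \<longrightarrow> (A \<beta> - seg (f \<beta>)) \<inter> (A \<gamma> - seg (f \<gamma>)) = {})))"

text \<open>f = <f_beta | beta < k> (f beta i = f_beta(i)) is a scale for singular l, k = l^+.\<close>
definition is_scale :: "'o::wellorder \<Rightarrow> 'o \<Rightarrow> ('o \<Rightarrow> 'o \<Rightarrow> 'o) \<Rightarrow> bool" where
  "is_scale l k f \<longleftrightarrow> (\<exists>ls :: 'o \<Rightarrow> 'o.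
     (\<forall>i<cf l. regular_card (ls i) \<and> ls i < l) \<and>
     (\<forall>i<cf l. \<forall>j<cf l. i < j \<longrightarrow> ls i < ls j) \<and>
     (\<forall>x<l. \<exists>i<cf l. x \<le> ls i) \<and>
     (\<forall>\<beta><k. \<forall>i<cf l. f \<beta> i < ls i) \<and>
     (\<forall>\<beta><k. \<forall>\<gamma><k. \<beta> < \<gamma> \<longrightarrow>
        (\<exists>i<cf l. \<forall>j. i \<le> j \<and> j < cf l \<longrightarrow> f \<beta> j < f \<gamma> j)) \<and>
     (\<forall>g :: 'o \<Rightarrow> 'o. (\<forall>i<cf l. g i < ls i) \<longrightarrow>
        (\<exists>\<beta><k. \<exists>i<cf l. \<forall>j. i \<le> j \<and> j < cf l \<longrightarrow> g j < f \<beta> j)))"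

definition G_set :: "'o::wellorder \<Rightarrow> 'o \<Rightarrow> ('o \<Rightarrow> 'o \<Rightarrow> 'o) \<Rightarrow> 'o set" where
  "G_set l k f = {a \<in> E_neq k (cf l). \<exists>A i. cofinal_in A a \<and> i < cf l \<and>
     (\<forall>\<gamma>\<in>A. \<forall>\<delta>\<in>A. \<gamma> < \<delta> \<longrightarrow> (\<forall>j. i \<le> j \<and> j < cf l \<longrightarrow> f \<gamma> j < f \<delta> j))}"

definition club :: "'o::wellorder \<Rightarrow> 'o set \<Rightarrow> bool" where
  "club k C \<longleftrightarrow> cofinal_in C k \<and>
     (\<forall>a<k. is_limit a \<and> cofinal_in (C \<inter> seg a) a \<longrightarrow> a \<in> C)"

definition stationary :: "'o::wellorder \<Rightarrow> 'o set \<Rightarrow> bool" where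
  "stationary k S \<longleftrightarrow> S \<subseteq> seg k \<and> (\<forall>C. club k C \<longrightarrow> S \<inter> C \<noteq> {})"

text \<open>First-order logic over a countable language: function symbols and relation
  symbols are indexed by nat (each symbol may be applied to argument lists of any length).\<close>
datatype trm = Var nat | Fn nat "trm list"

datatype fm = Eq trm trm | Rel nat "trm list" | Neg fm | Conj fm fm | Ex nat fm

fun eval :: "(nat \<Rightarrow> 'a list \<Rightarrow> 'a) \<Rightarrow> (nat \<Rightarrow> 'a) \<Rightarrow> trm \<Rightarrow> 'a" where
  "eval F s (Var i) = s i"
| "eval F s (Fn n ts) = F n (map (eval F s) ts)"

fun sat :: "'a set \<Rightarrow> (nat \<Rightarrow> 'a list \<Rightarrow> 'a) \<Rightarrow> (nat \<Rightarrow> 'a list \<Rightarrow> bool) \<Rightarrow> fm \<Rightarrow> (nat \<Rightarrow> 'a) \<Rightarrow> bool" where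
  "sat D F R (Eq t u) s = (eval F s t = eval F s u)"
| "sat D F R (Rel n ts) s = R n (map (eval F s) ts)"
| "sat D F R (Neg \<phi>) s = (\<not> sat D F R \<phi> s)"
| "sat D F R (Conj \<phi> \<psi>) s = (sat D F R \<phi> s \<and> sat D F R \<psi> s)"
| "sat D F R (Ex i \<phi>) s = (\<exists>a\<in>D. sat D F R \<phi> (s(i := a)))"

definition is_structure :: "'a set \<Rightarrow> (nat \<Rightarrow> 'a list \<Rightarrow> 'a) \<Rightarrow> bool" where
  "is_structure D F \<longleftrightarrow> D \<noteq> {} \<and> (\<forall>n xs. set xs \<subseteq> D \<longrightarrow> F n xs \<in> D)"

definition elem_sub :: "'a set \<Rightarrow> 'a set \<Rightarrow> (nat \<Rightarrow> 'a list \<Rightarrow> 'a) \<Rightarrow> (nat \<Rightarrow> 'a list \<Rightarrow> bool) \<Rightarrow> bool" where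
  "elem_sub M D F R \<longleftrightarrow> M \<subseteq> D \<and> is_structure M F \<and>
     (\<forall>\<phi> s. range s \<subseteq> M \<longrightarrow> (sat M F R \<phi> s \<longleftrightarrow> sat D F R \<phi> s))"

text \<open>Chang's conjecture (k, m) ->> (a1, aleph_0), with k = aleph_{omega+1},
  m = aleph_omega, a1 = aleph_1.\<close>
definition chang :: "'o::wellorder \<Rightarrow> 'o \<Rightarrow> 'o \<Rightarrow> bool" where
  "chang k m a1 \<longleftrightarrow> (\<forall>F R. is_structure (seg k) F \<longrightarrow>
     (\<exists>M. elem_sub M (seg k) F R \<and> M \<approx> seg a1 \<and> countable (M \<inter> seg m)))"

end

theory Submission
  imports Defs
begin

definition Lrel :: "('o::wellorder) rel" where "Lrel = {(x,y). x \<le> y}"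

lemma Lrel_Well_order: "Well_order (Lrel :: ('o::wellorder) rel)"
proof -
  have F: "Field (Lrel :: 'o rel) = UNIV" unfolding Lrel_def Field_def by auto
  have "Lrel - Id = {(x::'o,y). x < y}" unfolding Lrel_def by auto
  hence W: "wf (Lrel - Id :: 'o rel)" using wf by simp
  show ?thesis unfolding well_order_on_def linear_order_on_def partial_order_on_def
      preorder_on_def refl_on_def trans_on_def antisym_on_def total_on_def F
    using W by (auto simp: Lrel_def)
qed

lemma otp:
  fixes X :: "'o::wellorder set"
  assumes X: "X \<subseteq> seg a"
  shows "\<exists>e\<le>a. X \<approx> seg e"
proof -
  let ?L = "Lrel :: 'o rel"
  let ?r1 = "Restr ?L X" and ?r2 = "Restr ?L (seg a)"
  have WL: "Well_order ?L" by (rule Lrel_Well_order)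
  have W1: "Well_order ?r1" and W2: "Well_order ?r2" using WL Well_order_Restr by blast+
  have ReflL: "Refl ?L" using WL unfolding well_order_on_def linear_order_on_def partial_order_on_def preorder_on_def by blast
  have FL: "Field ?L = UNIV" unfolding Lrel_def Field_def by auto
  have F1: "Field ?r1 = X" using Refl_Field_Restr2[OF ReflL] FL by auto
  have F2: "Field ?r2 = seg a" using Refl_Field_Restr2[OF ReflL] FL by auto
  from ordLeq_total[OF W1 W2] show ?thesis
  proof
    assume "(?r1, ?r2) \<in> ordLeq"
    then obtain f where E: "embed ?r1 ?r2 f" unfolding ordLeq_def by blast
    have inj: "inj_on f X" using embed_inj_on[OF W1 E] F1 by simp
    have "wo_rel.ofilter ?r2 (f ` X)" using embed_Field_ofilter[OF W1 W2 E] F1 by simp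
    moreover have wr: "wo_rel ?r2" using W2 unfolding wo_rel_def .
    ultimately have "(\<exists>b\<in>seg a. f ` X = underS ?r2 b) \<or> f ` X = seg a"
      using wo_rel.ofilter_underS_Field[OF wr] F2 by simp
    moreover have "\<And>b. b \<in> seg a \<Longrightarrow> underS ?r2 b = seg b"
      unfolding underS_def seg_def Lrel_def by auto
    ultimately obtain e where "e \<le> a" "f ` X = seg e"
      unfolding seg_def by (metis less_imp_le mem_Collect_eq order_refl)
    moreover have "X \<approx> f ` X" using inj by (simp add: eqpoll_sym inj_on_image_eqpoll_self)
    ultimately show ?thesis by auto
  next
    assume "(?r2, ?r1) \<in> ordLeq"
    then obtain g where E: "embed ?r2 ?r1 g" unfolding ordLeq_def by blast
    have inj: "inj_on g (seg a)" using embed_inj_on[OF W2 E] F2 by simp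
    have "g ` seg a \<subseteq> X" using embed_Field[OF E] F1 F2 by simp
    hence "seg a \<lesssim> X" using inj unfolding lepoll_def by blast
    moreover have "X \<lesssim> seg a" using X by (rule subset_imp_lepoll)
    ultimately show ?thesis using lepoll_antisym by blast
  qed
qed


lemma seg_iff[simp]: "x \<in> seg a \<longleftrightarrow> x < a" unfolding seg_def by simp

lemma seg_mono: "(x::'o::wellorder) \<le> y \<Longrightarrow> seg x \<subseteq> seg y"
  unfolding seg_def by auto

lemma cofinal_seg: "cofinal_in (seg a) a"
  unfolding cofinal_in_def by auto

lemma cf_ex: "\<exists>B. cofinal_in B a \<and> B \<approx> seg (cf a)"
  unfolding cf_def by (rule LeastI[of _ a]) (use cofinal_seg in blast)

lemma cf_le: "cf a \<le> a"
  unfolding cf_def by (rule Least_le) (use cofinal_seg in blast)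

lemma cf_min:
  assumes "cofinal_in B a" shows "seg (cf a) \<lesssim> B"
proof -
  have "B \<subseteq> seg a" using assms unfolding cofinal_in_def by blast
  then obtain e where e: "e \<le> a" "B \<approx> seg e" using otp by blast
  have "cf a \<le> e" unfolding cf_def by (rule Least_le) (use assms e in blast)
  hence "seg (cf a) \<lesssim> seg e" by (intro subset_imp_lepoll seg_mono)
  also have "seg e \<approx> B" using e eqpoll_sym by blast
  finally show ?thesis .
qed

lemma cf_card: "is_card (cf a)"
  unfolding is_card_def
proof (intro allI impI notI)
  fix b assume b: "b < cf a" and E: "seg b \<approx> seg (cf a)"
  obtain B where B: "cofinal_in B a" "B \<approx> seg (cf a)" using cf_ex by blast
  have "B \<approx> seg b" using B(2) E eqpoll_sym eqpoll_trans by blast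
  hence "cf a \<le> b" unfolding cf_def by (intro Least_le) (use B in blast)
  thus False using b by simp
qed

lemma card_le: "is_card x \<Longrightarrow> seg x \<lesssim> seg y \<Longrightarrow> x \<le> y"
proof (rule ccontr)
  assume c: "is_card x" "seg x \<lesssim> seg y" "\<not> x \<le> y"
  hence "y < x" by simp
  hence "seg y \<lesssim> seg x" by (intro subset_imp_lepoll seg_mono) simp
  hence "seg y \<approx> seg x" using c lepoll_antisym by blast
  thus False using c \<open>y < x\<close> unfolding is_card_def by blast
qed

lemma card_less: "is_card y \<Longrightarrow> x < y \<Longrightarrow> seg x \<prec> seg y"
  unfolding lesspoll_def is_card_def
  by (auto intro!: subset_imp_lepoll seg_mono)

lemma limit_cofinal_infinite:
  assumes L: "is_limit a" and B: "cofinal_in B a" shows "infinite B"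
proof
  assume fin: "finite B"
  obtain x where "x < a" using L unfolding is_limit_def by blast
  then obtain y where "y \<in> B" using B unfolding cofinal_in_def by blast
  hence ne: "B \<noteq> {}" by blast
  have "Max B \<in> B" using Max_in[OF fin ne] .
  hence "Max B < a" using B unfolding cofinal_in_def by auto
  then obtain z where z: "z < a" "Max B < z" using L unfolding is_limit_def by blast
  then obtain b where "b \<in> B" "z \<le> b" using B unfolding cofinal_in_def by blast
  moreover have "b \<le> Max B" using Max_ge[OF fin \<open>b \<in> B\<close>] .
  ultimately show False using z by simp
qed

lemma limit_cf_infinite: "is_limit a \<Longrightarrow> infinite (seg (cf a))"
  using cf_ex[of a] limit_cofinal_infinite eqpoll_finite_iff by blast

lemma card_infinite_limit:
  assumes C: "is_card l" and I: "infinite (seg l)" shows "is_limit l"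
  unfolding is_limit_def
proof (intro conjI allI impI)
  show "\<exists>x. x < l" using I by (metis finite.emptyI seg_iff subsetI subset_antisym empty_iff)
next
  fix x assume x: "x < l"
  show "\<exists>y<l. x < y"
  proof (rule ccontr)
    assume "\<not> (\<exists>y<l. x < y)"
    hence sub: "seg l \<subseteq> insert x (seg x)" by (auto simp: not_less) (metis le_neq_trans not_less)
    have "infinite (seg x)" using sub I finite_subset by blast
    hence "insert x (seg x) \<approx> seg x" by (rule infinite_insert_eqpoll)
    hence "seg l \<lesssim> seg x" using sub subset_imp_lepoll lepoll_trans2 by blast
    moreover have "seg x \<lesssim> seg l" using x by (intro subset_imp_lepoll seg_mono) simp
    ultimately have "seg x \<approx> seg l" using lepoll_antisym by blast
    thus False using C x unfolding is_card_def by blast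
  qed
qed

lemma cf_regular:
  assumes L: "is_limit l" and S: "cofinal_in S (cf l)"
  shows "seg (cf l) \<lesssim> S"
proof -
  define \<mu> where "\<mu> = cf l"
  obtain W where W: "cofinal_in W l" "W \<approx> seg \<mu>" using cf_ex \<mu>_def by blast
  obtain h where h: "bij_betw h (seg \<mu>) W" using W(2) eqpoll_sym unfolding eqpoll_def by blast
  have hW: "\<And>\<xi>. \<xi> < \<mu> \<Longrightarrow> h \<xi> < l" using h W(1) unfolding bij_betw_def cofinal_in_def by (auto simp: image_subset_iff)
  have Wim: "W = h ` seg \<mu>" using h unfolding bij_betw_def by simp
  define R where "R = {\<xi>. \<xi> < \<mu> \<and> (\<forall>\<zeta><\<xi>. h \<zeta> < h \<xi>)}"
  have recd: "\<exists>\<xi>\<in>R. x \<le> h \<xi>" if x: "x < l" for x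
  proof -
    obtain y where "y \<in> W" "x \<le> y" using W(1) x unfolding cofinal_in_def by blast
    then obtain \<xi>0 where \<xi>0: "\<xi>0 < \<mu>" "x \<le> h \<xi>0" using Wim by auto
    define \<xi> where "\<xi> = (LEAST \<xi>. \<xi> < \<mu> \<and> x \<le> h \<xi>)"
    have P: "\<xi> < \<mu> \<and> x \<le> h \<xi>" unfolding \<xi>_def by (rule LeastI[of _ \<xi>0]) (use \<xi>0 in blast)
    have "\<forall>\<zeta><\<xi>. h \<zeta> < h \<xi>"
    proof (intro allI impI)
      fix \<zeta> assume "\<zeta> < \<xi>"
      hence "\<not> (\<zeta> < \<mu> \<and> x \<le> h \<zeta>)" unfolding \<xi>_def by (rule not_less_Least)
      moreover have "\<zeta> < \<mu>" using \<open>\<zeta> < \<xi>\<close> P by (meson less_trans)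
      ultimately show "h \<zeta> < h \<xi>" using P by (meson leI less_le_trans)
    qed
    thus ?thesis using P unfolding R_def by blast
  qed
  have mono: "h \<rho> \<le> h \<rho>'" if "\<rho> \<in> R" "\<rho>' \<in> R" "\<rho> \<le> \<rho>'" for \<rho> \<rho>'
    using that unfolding R_def by (cases "\<rho> = \<rho>'") (auto intro: less_imp_le)
  have unb: "\<exists>\<rho>\<in>R. \<xi> \<le> \<rho>" if "\<xi> < \<mu>" for \<xi>
  proof (rule ccontr)
    assume "\<not> (\<exists>\<rho>\<in>R. \<xi> \<le> \<rho>)"
    hence Rs: "R \<subseteq> seg \<xi>" by (auto simp: not_le)
    have "cofinal_in (h ` R) l" unfolding cofinal_in_def
      using recd hW by (auto simp: R_def)
    hence "seg \<mu> \<lesssim> h ` R" using cf_min \<mu>_def by blast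
    also have "h ` R \<lesssim> R" by (rule image_lepoll)
    also have "R \<lesssim> seg \<xi>" using Rs by (rule subset_imp_lepoll)
    finally have "\<mu> \<le> \<xi>" using card_le cf_card \<mu>_def by blast
    thus False using that by simp
  qed
  define r where "r s = (LEAST \<rho>. \<rho> \<in> R \<and> s \<le> \<rho>)" for s
  have r: "r s \<in> R \<and> s \<le> r s" if "s < \<mu>" for s
    using unb[OF that] unfolding r_def by (metis (mono_tags, lifting) LeastI)
  have Sm: "\<And>s. s \<in> S \<Longrightarrow> s < \<mu>" using S \<mu>_def unfolding cofinal_in_def by auto
  have "cofinal_in (h ` r ` S) l" unfolding cofinal_in_def
  proof (intro conjI allI impI)
    show "h ` r ` S \<subseteq> seg l" using r Sm hW R_def by auto
  next
    fix x assume "x < l"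
    then obtain \<xi> where \<xi>: "\<xi> \<in> R" "x \<le> h \<xi>" using recd by blast
    then obtain s where s: "s \<in> S" "\<xi> \<le> s" using S \<mu>_def unfolding cofinal_in_def R_def by blast
    have "r s \<in> R" "\<xi> \<le> r s" using r[OF Sm[OF s(1)]] s by auto
    hence "h \<xi> \<le> h (r s)" using mono \<xi> by blast
    thus "\<exists>y\<in>h ` r ` S. x \<le> y" using \<xi> s by (metis image_eqI order_trans)
  qed
  hence "seg \<mu> \<lesssim> h ` r ` S" using cf_min \<mu>_def by blast
  also have "h ` r ` S \<lesssim> r ` S" by (rule image_lepoll)
  also have "r ` S \<lesssim> S" by (rule image_lepoll)
  finally show ?thesis unfolding \<mu>_def .
qed

lemma cf_bounded:
  assumes L: "is_limit l" and S: "S \<subseteq> seg (cf l)" "S \<prec> seg (cf l)"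
  shows "\<exists>j<cf l. \<forall>s\<in>S. s < j"
proof (rule ccontr)
  assume N: "\<not> ?thesis"
  have "\<forall>x<cf l. \<exists>y\<in>S. x \<le> y"
  proof (intro allI impI)
    fix x assume "x < cf l"
    then obtain s where "s \<in> S" "\<not> s < x" using N by blast
    thus "\<exists>y\<in>S. x \<le> y" by (auto simp: not_less)
  qed
  hence "cofinal_in S (cf l)" using S(1) unfolding cofinal_in_def by blast
  hence "seg (cf l) \<lesssim> S" using cf_regular L by blast
  thus False using S(2) unfolding lesspoll_def using lepoll_antisym by blast
qed

lemma mismatch:
  assumes L: "is_limit l" and ne: "cf a \<noteq> cf l"
    and X: "cofinal_in X a" and g: "\<forall>x\<in>X. g x < cf l"
  shows "\<exists>j<cf l. \<exists>X'\<subseteq>X. cofinal_in X' a \<and> (\<forall>x\<in>X'. g x \<le> j)"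
proof (rule ccontr)
  define \<mu> where "\<mu> = cf l"
  assume H: "\<not> ?thesis"
  have Xa: "\<And>x. x \<in> X \<Longrightarrow> x < a" using X unfolding cofinal_in_def seg_def by blast
  have bnd: "\<exists>y. y < a \<and> (\<forall>x\<in>X. g x \<le> j \<longrightarrow> x < y)" if j: "j < \<mu>" for j
  proof -
    have "\<not> cofinal_in {x\<in>X. g x \<le> j} a"
    proof
      assume "cofinal_in {x\<in>X. g x \<le> j} a"
      hence "\<exists>j<cf l. \<exists>X'\<subseteq>X. cofinal_in X' a \<and> (\<forall>x\<in>X'. g x \<le> j)" using j \<mu>_def
        by (intro exI[of _ j] conjI exI[of _ "{x\<in>X. g x \<le> j}"]) auto
      thus False using H by blast
    qed
    moreover have "{x\<in>X. g x \<le> j} \<subseteq> seg a" using Xa by auto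
    ultimately show ?thesis unfolding cofinal_in_def by (auto simp: not_le) (metis leD leI)
  qed
  then obtain b where b: "\<And>j. j < \<mu> \<Longrightarrow> b j < a \<and> (\<forall>x\<in>X. g x \<le> j \<longrightarrow> x < b j)" by metis
  have "cofinal_in (b ` seg \<mu>) a" unfolding cofinal_in_def
  proof (intro conjI allI impI)
    show "b ` seg \<mu> \<subseteq> seg a" using b by auto
  next
    fix x assume "x < a"
    then obtain x' where x': "x' \<in> X" "x \<le> x'" using X unfolding cofinal_in_def by blast
    have "g x' < \<mu>" using g x' \<mu>_def by blast
    hence "x' < b (g x')" using b x' by blast
    thus "\<exists>y\<in>b ` seg \<mu>. x \<le> y" using x' \<open>g x' < \<mu>\<close> by (intro bexI[of _ "b (g x')"]) auto
  qed
  hence "seg (cf a) \<lesssim> b ` seg \<mu>" by (rule cf_min)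
  also have "b ` seg \<mu> \<lesssim> seg \<mu>" by (rule image_lepoll)
  finally have "cf a \<le> \<mu>" using card_le cf_card by blast
  hence lt: "cf a < \<mu>" using ne \<mu>_def by simp
  obtain C where C: "cofinal_in C a" "C \<approx> seg (cf a)" using cf_ex by blast
  have "\<exists>x. x \<in> X \<and> c \<le> x" if "c \<in> C" for c
    using that C(1) X unfolding cofinal_in_def by (meson seg_iff subsetD)
  then obtain xc where xc: "\<And>c. c \<in> C \<Longrightarrow> xc c \<in> X \<and> c \<le> xc c" by metis
  have X'c: "cofinal_in (xc ` C) a" unfolding cofinal_in_def
  proof (intro conjI allI impI)
    show "xc ` C \<subseteq> seg a" using xc Xa by auto
  next
    fix x assume "x < a"
    then obtain c where "c \<in> C" "x \<le> c" using C(1) unfolding cofinal_in_def by blast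
    thus "\<exists>y\<in>xc ` C. x \<le> y" using xc by (meson image_eqI order_trans)
  qed
  have "g ` xc ` C \<lesssim> xc ` C" by (rule image_lepoll)
  also have "xc ` C \<lesssim> C" by (rule image_lepoll)
  also have "C \<approx> seg (cf a)" by (rule C(2))
  also have "seg (cf a) \<prec> seg \<mu>" using card_less[OF _ lt] cf_card \<mu>_def by blast
  finally have "g ` xc ` C \<prec> seg \<mu>" .
  moreover have "g ` xc ` C \<subseteq> seg \<mu>" using g xc unfolding \<mu>_def by (simp add: image_subset_iff)
  ultimately obtain j where j: "j < \<mu>" "\<forall>s\<in>g ` xc ` C. s < j" using cf_bounded[OF L, of "g ` xc ` C"] unfolding \<mu>_def by blast
  have "xc ` C \<subseteq> X" using xc by auto
  moreover have "\<forall>x\<in>xc ` C. g x \<le> j" using j by auto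
  ultimately have "\<exists>j<cf l. \<exists>X'\<subseteq>X. cofinal_in X' a \<and> (\<forall>x\<in>X'. g x \<le> j)"
    using X'c j \<mu>_def by (intro exI[of _ j] conjI exI[of _ "xc ` C"]) auto
  thus False using H by blast
qed

lemma cofinal_lt: "cofinal_in B a \<Longrightarrow> x \<in> B \<Longrightarrow> x < a"
  unfolding cofinal_in_def by (meson seg_iff subsetD)

lemma cofinal_tail:
  assumes B: "cofinal_in B a" and la: "l < a"
  shows "cofinal_in {\<beta>\<in>B. l \<le> \<beta>} a"
  unfolding cofinal_in_def
proof (intro conjI allI impI)
  show "{\<beta> \<in> B. l \<le> \<beta>} \<subseteq> seg a" using B cofinal_lt by auto
next
  fix x assume "x < a"
  hence "max x l < a" using la by simp
  then obtain y where "y \<in> B" "max x l \<le> y" using B unfolding cofinal_in_def by blast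
  thus "\<exists>y\<in>{\<beta> \<in> B. l \<le> \<beta>}. x \<le> y" by auto
qed

lemma infcard_limit: "inf_card l \<Longrightarrow> is_limit l"
  unfolding inf_card_def using card_infinite_limit by blast

lemma csucc_facts:
  assumes L: "inf_card l" and K: "is_csucc l k"
  shows "l < k" "is_card k" "infinite (seg k)" "is_limit k" "\<And>c. c < k \<Longrightarrow> seg c \<lesssim> seg l"
proof -
  show sm: "\<And>c. c < k \<Longrightarrow> seg c \<lesssim> seg l" using K unfolding is_csucc_def by blast
  have lt: "seg l \<prec> seg k" using K unfolding is_csucc_def by blast
  show lk: "l < k"
  proof (rule ccontr)
    assume "\<not> l < k"
    hence "seg k \<lesssim> seg l" by (intro subset_imp_lepoll seg_mono) simp
    thus False using lt unfolding lesspoll_def using lepoll_antisym by blast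
  qed
  show ck: "is_card k" unfolding is_card_def
  proof (intro allI impI notI)
    fix b assume "b < k" "seg b \<approx> seg k"
    hence "seg k \<lesssim> seg l" using sm eqpoll_sym lepoll_trans1 by blast
    thus False using lt unfolding lesspoll_def using lepoll_antisym by blast
  qed
  have "seg l \<subseteq> seg k" using lk by (intro seg_mono) simp
  thus ik: "infinite (seg k)" using L finite_subset unfolding inf_card_def by blast
  show "is_limit k" using card_infinite_limit[OF ck ik] .
qed

definition bot0 :: "'o::wellorder" where "bot0 = (LEAST x. True)"

lemma bot0_le: "bot0 \<le> x" unfolding bot0_def by (rule Least_le) simp

lemma bot0_less: "x < a \<Longrightarrow> bot0 < a" using bot0_le le_less_trans by blast

lemma limit_nonzero: "is_limit a \<Longrightarrow> bot0 < a"
  unfolding is_limit_def using bot0_less by blast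

lemma small_case:
  assumes La: "is_limit a" and al: "a \<le> l" and B: "cofinal_in B a"
    and d: "\<And>\<beta>. \<beta> < l \<Longrightarrow> d bot0 \<beta> = \<beta>" and z: "bot0 < \<delta>"
  shows "\<exists>\<eta>. \<eta> < \<delta> \<and> \<eta> < a \<and> (\<exists>B'\<subseteq>B. cofinal_in B' a \<and> inj_on (d \<eta>) B')"
proof (rule exI[of _ bot0], intro conjI)
  show "bot0 < \<delta>" by (rule z)
  show "bot0 < a" using limit_nonzero La .
  have "inj_on (d bot0) B"
  proof (rule inj_onI)
    fix x y assume "x \<in> B" "y \<in> B" "d bot0 x = d bot0 y"
    moreover have "x < l" "y < l" using cofinal_lt[OF B] \<open>x \<in> B\<close> \<open>y \<in> B\<close> al by (meson less_le_trans)+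
    ultimately show "x = y" using d by simp
  qed
  thus "\<exists>B'\<subseteq>B. cofinal_in B' a \<and> inj_on (d bot0) B'" using B by blast
qed

lemma small_not_cofinal:
  assumes "S \<subseteq> seg a" "S \<prec> seg (cf a)"
  shows "\<exists>y<a. \<forall>s\<in>S. s < y"
proof (rule ccontr)
  assume N: "\<not> ?thesis"
  have "\<forall>x<a. \<exists>y\<in>S. x \<le> y"
  proof (intro allI impI)
    fix x assume "x < a"
    then obtain s where "s \<in> S" "\<not> s < x" using N by blast
    thus "\<exists>y\<in>S. x \<le> y" by (auto simp: not_less)
  qed
  hence "cofinal_in S a" using assms(1) unfolding cofinal_in_def by blast
  hence "seg (cf a) \<lesssim> S" by (rule cf_min)
  thus False using assms(2) unfolding lesspoll_def using lepoll_antisym by blast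
qed

lemma atMost_lesspoll:
  assumes C: "is_card \<mu>" and I: "infinite (seg \<mu>)" and j: "j < \<mu>"
  shows "{i. i \<le> j} \<prec> seg \<mu>"
proof (cases "finite (seg j)")
  case True
  have "{i. i \<le> j} = insert j (seg j)" by (auto simp: seg_def)
  hence "finite {i. i \<le> j}" using True by simp
  thus ?thesis using I finite_lesspoll_infinite by blast
next
  case False
  have "{i. i \<le> j} = insert j (seg j)" by (auto simp: seg_def)
  also have "\<dots> \<approx> seg j" using False by (rule infinite_insert_eqpoll)
  also have "seg j \<prec> seg \<mu>" using card_less[OF C j] .
  finally show ?thesis .
qed

lemma bseq:
  assumes L: "inf_card l"
  shows "\<exists>b. (\<forall>j<cf l. b j < l) \<and> (\<forall>x<l. \<exists>i<cf l. \<forall>j. i \<le> j \<and> j < cf l \<longrightarrow> x < b j)"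
proof -
  define \<mu> where "\<mu> = cf l"
  have Ll: "is_limit l" using infcard_limit L .
  have Iu: "infinite (seg \<mu>)" using limit_cf_infinite[OF Ll] \<mu>_def by simp
  have Cu: "is_card \<mu>" using cf_card \<mu>_def by simp
  obtain W where W: "cofinal_in W l" "W \<approx> seg \<mu>" using cf_ex \<mu>_def by blast
  obtain h where h: "bij_betw h (seg \<mu>) W" using W(2) eqpoll_sym unfolding eqpoll_def by blast
  have hW: "\<And>\<xi>. \<xi> < \<mu> \<Longrightarrow> h \<xi> < l" using h W(1) unfolding bij_betw_def cofinal_in_def by (auto simp: image_subset_iff)
  have Wim: "W = h ` seg \<mu>" using h unfolding bij_betw_def by simp
  have ex: "\<exists>y<l. \<forall>s\<in>h ` {i. i \<le> j}. s < y" if j: "j < \<mu>" for j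
  proof (rule small_not_cofinal)
    show "h ` {i. i \<le> j} \<subseteq> seg l" using hW j by auto
    have "h ` {i. i \<le> j} \<lesssim> {i. i \<le> j}" by (rule image_lepoll)
    also have "{i. i \<le> j} \<prec> seg \<mu>" using atMost_lesspoll[OF Cu Iu j] .
    finally show "h ` {i. i \<le> j} \<prec> seg (cf l)" unfolding \<mu>_def .
  qed
  then obtain b where b: "\<And>j. j < \<mu> \<Longrightarrow> b j < l \<and> (\<forall>s\<in>h ` {i. i \<le> j}. s < b j)" by metis
  show ?thesis
  proof (rule exI[of _ b], rule conjI)
    show "\<forall>j<cf l. b j < l" using b \<mu>_def by blast
  next
    show "\<forall>x<l. \<exists>i<cf l. \<forall>j. i \<le> j \<and> j < cf l \<longrightarrow> x < b j"
    proof (intro allI impI)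
    fix x assume "x < l"
    then obtain y where "y \<in> W" "x \<le> y" using W(1) unfolding cofinal_in_def by blast
    then obtain i where i: "i < \<mu>" "x \<le> h i" using Wim by auto
    show "\<exists>i<cf l. \<forall>j. i \<le> j \<and> j < cf l \<longrightarrow> x < b j"
    proof (intro exI conjI allI impI)
      show "i < cf l" using i \<mu>_def by simp
      fix j assume "i \<le> j \<and> j < cf l"
      hence "h i < b j" using b[of j] \<mu>_def by auto
      thus "x < b j" using i by simp
    qed
    qed
  qed
qed

lemma times_lesspoll:
  assumes "infinite C" "C \<prec> S" shows "C \<times> C \<prec> S"
proof -
  have "\<exists>f. bij_betw f (C \<times> C) C" using card_of_Times_same_infinite[OF assms(1)] card_of_ordIso by blast
  hence "C \<times> C \<approx> C" unfolding eqpoll_def .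
  thus ?thesis using assms(2) eq_lesspoll_trans by blast
qed

definition Gfun :: "'o::wellorder \<Rightarrow> ('o \<Rightarrow> 'o) \<Rightarrow> ('o \<Rightarrow> 'o \<Rightarrow> 'o) \<Rightarrow> 'o \<Rightarrow> 'o \<Rightarrow> 'o" where
  "Gfun l b e = wfrec {(x,y). x < y} (\<lambda>G \<beta> j. LEAST v. v < l \<and> v \<notin> {G \<gamma> j |\<gamma>. \<gamma> < \<beta> \<and> e \<beta> \<gamma> < b j})"

lemma Gfun_eq:
  "Gfun l b e \<beta> j = (LEAST v. v < l \<and> v \<notin> {Gfun l b e \<gamma> j |\<gamma>. \<gamma> < \<beta> \<and> e \<beta> \<gamma> < b j})"
proof -
  have "Gfun l b e \<beta> = (\<lambda>j. LEAST v. v < l \<and> v \<notin> {cut (Gfun l b e) {(x,y). x < y} \<beta> \<gamma> j |\<gamma>. \<gamma> < \<beta> \<and> e \<beta> \<gamma> < b j})"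
    unfolding Gfun_def by (subst wfrec[OF wf]) (rule refl)
  moreover have "{cut (Gfun l b e) {(x,y). x < y} \<beta> \<gamma> j |\<gamma>. \<gamma> < \<beta> \<and> e \<beta> \<gamma> < b j}
      = {Gfun l b e \<gamma> j |\<gamma>. \<gamma> < \<beta> \<and> e \<beta> \<gamma> < b j}"
    by (auto simp: cut_def)
  ultimately show ?thesis by (simp only:)
qed

lemma part1:
  assumes L: "inf_card l" and K: "is_csucc l k"
  shows "\<exists>d. is_map d (cf l) k l \<and> E_less k (cf l) \<subseteq> A_set (cf l) k d"
proof -
  define \<mu> where "\<mu> = cf l"
  have Ll: "is_limit l" using infcard_limit L .
  have Iu: "infinite (seg \<mu>)" using limit_cf_infinite[OF Ll] \<mu>_def by simp
  have Cu: "is_card \<mu>" using cf_card \<mu>_def by simp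
  have Cl: "is_card l" using L unfolding inf_card_def by simp
  have ul: "\<mu> \<le> l" using cf_le \<mu>_def by simp
  obtain b where b: "\<forall>j<\<mu>. b j < l" "\<forall>x<l. \<exists>i<\<mu>. \<forall>j. i \<le> j \<and> j < \<mu> \<longrightarrow> x < b j"
    using bseq[OF L] \<mu>_def by blast
  have "\<exists>f. inj_on f (seg \<beta>) \<and> f ` seg \<beta> \<subseteq> seg l" if "\<beta> < k" for \<beta>
    using csucc_facts(5)[OF L K that] unfolding lepoll_def by blast
  then obtain e where e: "\<And>\<beta>. \<beta> < k \<Longrightarrow> inj_on (e \<beta>) (seg \<beta>) \<and> e \<beta> ` seg \<beta> \<subseteq> seg l" by metis
  define G where "G = Gfun l b e"
  have Gprop: "G \<beta> j < l \<and> G \<beta> j \<notin> {G \<gamma> j |\<gamma>. \<gamma> < \<beta> \<and> e \<beta> \<gamma> < b j}"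
    if \<beta>: "\<beta> < k" and j: "j < \<mu>" for \<beta> j
  proof -
    define T where "T = {\<gamma>. \<gamma> < \<beta> \<and> e \<beta> \<gamma> < b j}"
    have FT: "{G \<gamma> j |\<gamma>. \<gamma> < \<beta> \<and> e \<beta> \<gamma> < b j} = (\<lambda>\<gamma>. G \<gamma> j) ` T" unfolding T_def by auto
    have "inj_on (e \<beta>) T" using e[OF \<beta>] unfolding T_def by (rule conjE) (erule inj_on_subset, auto)
    moreover have "e \<beta> ` T \<subseteq> seg (b j)" unfolding T_def by auto
    ultimately have "T \<lesssim> seg (b j)" unfolding lepoll_def by blast
    hence "(\<lambda>\<gamma>. G \<gamma> j) ` T \<lesssim> seg (b j)" using image_lepoll lepoll_trans by blast
    also have "seg (b j) \<prec> seg l" using card_less[OF Cl] b(1) j by blast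
    finally have lt: "(\<lambda>\<gamma>. G \<gamma> j) ` T \<prec> seg l" .
    have "\<exists>v. v < l \<and> v \<notin> (\<lambda>\<gamma>. G \<gamma> j) ` T"
    proof (rule ccontr)
      assume "\<not> ?thesis"
      hence "seg l \<subseteq> (\<lambda>\<gamma>. G \<gamma> j) ` T" by auto
      hence "seg l \<lesssim> (\<lambda>\<gamma>. G \<gamma> j) ` T" by (rule subset_imp_lepoll)
      thus False using lt unfolding lesspoll_def using lepoll_antisym by blast
    qed
    hence "G \<beta> j < l \<and> G \<beta> j \<notin> (\<lambda>\<gamma>. G \<gamma> j) ` T"
      unfolding G_def Gfun_eq[of l b e \<beta> j] unfolding G_def[symmetric] FT
      by (rule LeastI_ex)
    thus ?thesis using FT by simp
  qed
  have Gdiff: "\<exists>i<\<mu>. \<forall>j. i \<le> j \<and> j < \<mu> \<longrightarrow> G \<beta> j \<noteq> G \<gamma> j"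
    if g: "\<gamma> < \<beta>" and \<beta>: "\<beta> < k" for \<beta> \<gamma>
  proof -
    have "e \<beta> \<gamma> < l" using e[OF \<beta>] g by (auto simp: image_subset_iff)
    then obtain i where i: "i < \<mu>" "\<forall>j. i \<le> j \<and> j < \<mu> \<longrightarrow> e \<beta> \<gamma> < b j" using b(2) by blast
    show ?thesis
    proof (intro exI[of _ i] conjI allI impI)
      show "i < \<mu>" by (rule i(1))
      fix j assume j: "i \<le> j \<and> j < \<mu>"
      have "G \<gamma> j \<in> {G \<gamma> j |\<gamma>. \<gamma> < \<beta> \<and> e \<beta> \<gamma> < b j}" using g i(2) j by blast
      thus "G \<beta> j \<noteq> G \<gamma> j" using Gprop[OF \<beta>] j by auto
    qed
  qed
  define d where "d \<eta> \<beta> = (if \<beta> < l then \<beta> else G \<beta> \<eta>)" for \<eta> \<beta>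
  have map: "is_map d \<mu> k l" unfolding is_map_def d_def using Gprop by auto
  have "a \<in> A_set \<mu> k d" if a: "a \<in> E_less k \<mu>" for a
  proof -
    have ak: "a < k" and La: "is_limit a" and cfa: "cf a < \<mu>" using a unfolding E_less_def by auto
    have "\<exists>\<eta>. \<eta> < \<mu> \<and> \<eta> < a \<and> (\<exists>B'\<subseteq>B. cofinal_in B' a \<and> inj_on (d \<eta>) B')"
      if B: "cofinal_in B a" for B
    proof (cases "a \<le> l")
      case True
      show ?thesis
      proof (rule small_case[OF La True B])
        show "\<And>\<beta>. \<beta> < l \<Longrightarrow> d bot0 \<beta> = \<beta>" unfolding d_def by simp
        show "bot0 < \<mu>" using Iu bot0_less by (metis finite.emptyI seg_iff subsetI subset_antisym empty_iff)
      qed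
    next
      case False
      hence la: "l < a" by simp
      define B1 where "B1 = {\<beta>\<in>B. l \<le> \<beta>}"
      have B1: "cofinal_in B1 a" unfolding B1_def using cofinal_tail[OF B la] .
      obtain W where W: "cofinal_in W a" "W \<approx> seg (cf a)" using cf_ex by blast
      have "\<exists>x. x \<in> B1 \<and> w \<le> x" if "w \<in> W" for w
        using that W(1) B1 unfolding cofinal_in_def by (meson seg_iff subsetD)
      then obtain xc where xc: "\<And>w. w \<in> W \<Longrightarrow> xc w \<in> B1 \<and> w \<le> xc w" by metis
      define C where "C = xc ` W"
      have CB1: "C \<subseteq> B1" unfolding C_def using xc by auto
      have Cc: "cofinal_in C a" unfolding cofinal_in_def
      proof (intro conjI allI impI)
        show "C \<subseteq> seg a" using CB1 cofinal_lt[OF B1] by auto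
      next
        fix x assume "x < a"
        then obtain w where "w \<in> W" "x \<le> w" using W(1) unfolding cofinal_in_def by blast
        thus "\<exists>y\<in>C. x \<le> y" unfolding C_def using xc by (meson image_eqI order_trans)
      qed
      have Cinf: "infinite C" using limit_cofinal_infinite[OF La Cc] .
      have "C \<lesssim> W" unfolding C_def by (rule image_lepoll)
      also have "W \<approx> seg (cf a)" by (rule W(2))
      also have "seg (cf a) \<prec> seg \<mu>" using card_less[OF Cu cfa] .
      finally have "C \<prec> seg \<mu>" .
      hence CC: "C \<times> C \<prec> seg \<mu>" using times_lesspoll Cinf by blast
      define P where "P = {p. fst p \<in> C \<and> snd p \<in> C \<and> snd p < fst p}"
      define ind where "ind p = (SOME i. i < \<mu> \<and> (\<forall>j. i \<le> j \<and> j < \<mu> \<longrightarrow> G (fst p) j \<noteq> G (snd p) j))" for p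
      have Ck: "\<And>x. x \<in> C \<Longrightarrow> x < k" using cofinal_lt[OF Cc] ak by (meson less_trans)
      have indp: "ind p < \<mu> \<and> (\<forall>j. ind p \<le> j \<and> j < \<mu> \<longrightarrow> G (fst p) j \<noteq> G (snd p) j)" if "p \<in> P" for p
      proof -
        have fk: "fst p < k" and sf: "snd p < fst p" using that Ck unfolding P_def by auto
        have "\<exists>i. i < \<mu> \<and> (\<forall>j. i \<le> j \<and> j < \<mu> \<longrightarrow> G (fst p) j \<noteq> G (snd p) j)"
          using Gdiff[OF sf fk] by blast
        thus ?thesis unfolding ind_def by (rule someI_ex)
      qed
      have "ind ` P \<lesssim> P" by (rule image_lepoll)
      also have "P \<lesssim> C \<times> C" unfolding P_def by (rule subset_imp_lepoll) auto
      also have "C \<times> C \<prec> seg \<mu>" by (rule CC)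
      finally have "ind ` P \<prec> seg \<mu>" .
      moreover have "ind ` P \<subseteq> seg \<mu>" using indp by auto
      ultimately obtain j0 where j0: "j0 < \<mu>" "\<forall>s\<in>ind ` P. s < j0"
        using cf_bounded[OF Ll, of "ind ` P"] unfolding \<mu>_def by blast
      show ?thesis
      proof (intro exI[of _ j0] conjI)
        show "j0 < \<mu>" by (rule j0(1))
        show "j0 < a" using j0(1) ul la by simp
        have "inj_on (d j0) C"
        proof (rule inj_onI)
          fix x y assume x: "x \<in> C" and y: "y \<in> C" and eq: "d j0 x = d j0 y"
          have "l \<le> x" "l \<le> y" using x y CB1 unfolding B1_def by auto
          hence "\<not> x < l" "\<not> y < l" by auto
          hence eqG: "G x j0 = G y j0" using eq unfolding d_def by simp
          show "x = y"
          proof (rule ccontr)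
            assume "x \<noteq> y"
            then consider "y < x" | "x < y" by (meson linorder_neqE)
            thus False
            proof cases
              case 1
              hence "(x, y) \<in> P" using x y unfolding P_def by simp
              hence "G x j0 \<noteq> G y j0" using indp j0 by fastforce
              thus False using eqG by simp
            next
              case 2
              hence "(y, x) \<in> P" using x y unfolding P_def by simp
              hence "G y j0 \<noteq> G x j0" using indp j0 by fastforce
              thus False using eqG by simp
            qed
          qed
        qed
        moreover have "C \<subseteq> B" using CB1 unfolding B1_def by auto
        ultimately show "\<exists>B'\<subseteq>B. cofinal_in B' a \<and> inj_on (d j0) B'" using Cc by blast
      qed
    qed
    thus ?thesis unfolding A_set_def using ak by blast
  qed
  thus ?thesis using map \<mu>_def by blast
qed

lemma part2:
  assumes L: "inf_card l" and K: "is_csucc l k" and ADS: "ADS l k"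
  shows "\<exists>d. is_map d (cf l) k l \<and> E_neq k (cf l) \<subseteq> A_set (cf l) k d"
proof -
  define \<mu> where "\<mu> = cf l"
  have Ll: "is_limit l" using infcard_limit L .
  have Iu: "infinite (seg \<mu>)" using limit_cf_infinite[OF Ll] \<mu>_def by simp
  have ul: "\<mu> \<le> l" using cf_le \<mu>_def by simp
  obtain A where A1: "\<forall>\<beta><k. cofinal_in (A \<beta>) l" and
    A2: "\<forall>a<k. \<exists>f :: 'a \<Rightarrow> 'a. (\<forall>\<beta><a. f \<beta> < l) \<and>
        (\<forall>\<beta><a. \<forall>\<gamma><a. \<beta> \<noteq> \<gamma> \<longrightarrow> (A \<beta> - seg (f \<beta>)) \<inter> (A \<gamma> - seg (f \<gamma>)) = {})"
    using ADS unfolding ADS_def by blast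
  obtain b where b: "\<forall>j<\<mu>. b j < l" "\<forall>x<l. \<exists>i<\<mu>. \<forall>j. i \<le> j \<and> j < \<mu> \<longrightarrow> x < b j"
    using bseq[OF L] \<mu>_def by blast
  define D where "D \<eta> \<beta> = (LEAST v. v \<in> A \<beta> \<and> b \<eta> \<le> v)" for \<eta> \<beta>
  have Dp: "D \<eta> \<beta> \<in> A \<beta> \<and> b \<eta> \<le> D \<eta> \<beta> \<and> D \<eta> \<beta> < l" if \<beta>: "\<beta> < k" and \<eta>: "\<eta> < \<mu>" for \<eta> \<beta>
  proof -
    have "\<exists>v. v \<in> A \<beta> \<and> b \<eta> \<le> v" using A1 \<beta> b(1) \<eta> unfolding cofinal_in_def by blast
    hence "D \<eta> \<beta> \<in> A \<beta> \<and> b \<eta> \<le> D \<eta> \<beta>" unfolding D_def by (rule LeastI_ex)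
    moreover have "D \<eta> \<beta> < l" using calculation cofinal_lt A1 \<beta> by blast
    ultimately show ?thesis by blast
  qed
  define d where "d \<eta> \<beta> = (if \<beta> < l then \<beta> else D \<eta> \<beta>)" for \<eta> \<beta>
  have map: "is_map d \<mu> k l" unfolding is_map_def d_def using Dp by auto
  have "a \<in> A_set \<mu> k d" if a: "a \<in> E_neq k \<mu>" for a
  proof -
    have ak: "a < k" and La: "is_limit a" and cfa: "cf a \<noteq> \<mu>" using a unfolding E_neq_def by auto
    have "\<exists>\<eta>. \<eta> < \<mu> \<and> \<eta> < a \<and> (\<exists>B'\<subseteq>B. cofinal_in B' a \<and> inj_on (d \<eta>) B')"
      if B: "cofinal_in B a" for B
    proof (cases "a \<le> l")
      case True
      show ?thesis
      proof (rule small_case[OF La True B])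
        show "\<And>\<beta>. \<beta> < l \<Longrightarrow> d bot0 \<beta> = \<beta>" unfolding d_def by simp
        show "bot0 < \<mu>" using Iu bot0_less by (metis finite.emptyI seg_iff subsetI subset_antisym empty_iff)
      qed
    next
      case False
      hence la: "l < a" by simp
      define B1 where "B1 = {\<beta>\<in>B. l \<le> \<beta>}"
      have B1: "cofinal_in B1 a" unfolding B1_def using cofinal_tail[OF B la] .
      obtain f where f1: "\<forall>\<beta><a. f \<beta> < l" and
        f2: "\<forall>\<beta><a. \<forall>\<gamma><a. \<beta> \<noteq> \<gamma> \<longrightarrow> (A \<beta> - seg (f \<beta>)) \<inter> (A \<gamma> - seg (f \<gamma>)) = {}"
        using A2 ak by blast
      define g where "g \<beta> = (SOME i. i < \<mu> \<and> (\<forall>j. i \<le> j \<and> j < \<mu> \<longrightarrow> f \<beta> < b j))" for \<beta>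
      have gp: "g \<beta> < \<mu> \<and> (\<forall>j. g \<beta> \<le> j \<and> j < \<mu> \<longrightarrow> f \<beta> < b j)" if "\<beta> \<in> B1" for \<beta>
      proof -
        have "f \<beta> < l" using f1 cofinal_lt[OF B1 that] by blast
        hence "\<exists>i. i < \<mu> \<and> (\<forall>j. i \<le> j \<and> j < \<mu> \<longrightarrow> f \<beta> < b j)" using b(2) by blast
        thus ?thesis unfolding g_def by (rule someI_ex)
      qed
      have "\<forall>x\<in>B1. g x < cf l" using gp \<mu>_def by blast
      from mismatch[OF Ll _ B1 this] cfa \<mu>_def
      obtain j X' where j: "j < \<mu>" and X': "X' \<subseteq> B1" "cofinal_in X' a" "\<forall>x\<in>X'. g x \<le> j" by blast
      show ?thesis
      proof (intro exI[of _ j] conjI)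
        show "j < \<mu>" by (rule j)
        show "j < a" using j ul la by simp
        have inX: "d j x \<in> A x - seg (f x)" if x: "x \<in> X'" for x
        proof -
          have xB: "x \<in> B1" using x X' by blast
          have "\<not> x < l" using xB unfolding B1_def by auto
          hence "d j x = D j x" unfolding d_def by simp
          moreover have "x < k" using cofinal_lt[OF B1 xB] ak by simp
          ultimately have "d j x \<in> A x" "b j \<le> d j x" using Dp j by auto
          moreover have "f x < b j" using gp[OF xB] X'(3) x j by blast
          ultimately show ?thesis by auto
        qed
        have "inj_on (d j) X'"
        proof (rule inj_onI)
          fix x y assume x: "x \<in> X'" and y: "y \<in> X'" and eq: "d j x = d j y"
          show "x = y"
          proof (rule ccontr)
            assume ne: "x \<noteq> y"
            have "x < a" "y < a" using x y cofinal_lt[OF X'(2)] by auto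
            hence "(A x - seg (f x)) \<inter> (A y - seg (f y)) = {}" using f2 ne by blast
            moreover have "d j x \<in> A x - seg (f x)" using inX x by blast
            moreover have "d j x \<in> A y - seg (f y)" using inX y eq by simp
            ultimately show False by blast
          qed
        qed
        moreover have "X' \<subseteq> B" using X'(1) unfolding B1_def by auto
        ultimately show "\<exists>B'\<subseteq>B. cofinal_in B' a \<and> inj_on (d j) B'" using X'(2) by blast
      qed
    qed
    thus ?thesis unfolding A_set_def using ak by blast
  qed
  thus ?thesis using map \<mu>_def by blast
qed

lemma part3:
  assumes L: "inf_card l" and K: "is_csucc l k" and S: "is_scale l k f"
  shows "\<exists>d. is_map d (cf l) k l \<and> G_set l k f \<subseteq> A_set (cf l) k d"
proof -
  define \<mu> where "\<mu> = cf l"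
  have Ll: "is_limit l" using infcard_limit L .
  have Iu: "infinite (seg \<mu>)" using limit_cf_infinite[OF Ll] \<mu>_def by simp
  have ul: "\<mu> \<le> l" using cf_le \<mu>_def by simp
  have z\<mu>: "bot0 < \<mu>" using Iu bot0_less by (metis finite.emptyI seg_iff subsetI subset_antisym empty_iff)
  obtain ls where S1: "\<forall>i<\<mu>. regular_card (ls i) \<and> ls i < l"
    and S4: "\<forall>\<beta><k. \<forall>i<\<mu>. f \<beta> i < ls i"
    and S5: "\<forall>\<beta><k. \<forall>\<gamma><k. \<beta> < \<gamma> \<longrightarrow> (\<exists>i<\<mu>. \<forall>j. i \<le> j \<and> j < \<mu> \<longrightarrow> f \<beta> j < f \<gamma> j)"
    using S unfolding is_scale_def \<mu>_def by blast
  define d where "d \<eta> \<beta> = (if \<beta> < l then \<beta> else f \<beta> \<eta>)" for \<eta> \<beta>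
  have map: "is_map d \<mu> k l" unfolding is_map_def d_def using S1 S4 by (auto intro: less_trans)
  have "a \<in> A_set \<mu> k d" if a: "a \<in> G_set l k f" for a
  proof -
    have ak: "a < k" and La: "is_limit a" and cfa: "cf a \<noteq> \<mu>" using a unfolding G_set_def E_neq_def \<mu>_def by auto
    obtain As i0 where As: "cofinal_in As a" and i0: "i0 < \<mu>"
      and Inc: "\<forall>\<gamma>\<in>As. \<forall>\<delta>\<in>As. \<gamma> < \<delta> \<longrightarrow> (\<forall>j. i0 \<le> j \<and> j < \<mu> \<longrightarrow> f \<gamma> j < f \<delta> j)"
      using a unfolding G_set_def \<mu>_def by blast
    have "\<exists>\<eta>. \<eta> < \<mu> \<and> \<eta> < a \<and> (\<exists>B'\<subseteq>B. cofinal_in B' a \<and> inj_on (d \<eta>) B')"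
      if B: "cofinal_in B a" for B
    proof (cases "a \<le> l")
      case True
      show ?thesis
      proof (rule small_case[OF La True B])
        show "\<And>\<beta>. \<beta> < l \<Longrightarrow> d bot0 \<beta> = \<beta>" unfolding d_def by simp
        show "bot0 < \<mu>" by (rule z\<mu>)
      qed
    next
      case False
      hence la: "l < a" by simp
      define B1 where "B1 = {\<beta>\<in>B. l \<le> \<beta>}"
      have B1: "cofinal_in B1 a" unfolding B1_def using cofinal_tail[OF B la] .
      have Ak: "\<And>x. x \<in> As \<Longrightarrow> x < k" using cofinal_lt[OF As] ak by (meson less_trans)
      define u where "u \<beta> = (LEAST x. x \<in> As \<and> \<beta> \<le> x)" for \<beta>
      have up: "u \<beta> \<in> As \<and> \<beta> \<le> u \<beta>" if "\<beta> < a" for \<beta>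
      proof -
        have "\<exists>x. x \<in> As \<and> \<beta> \<le> x" using As that unfolding cofinal_in_def by blast
        thus ?thesis unfolding u_def by (rule LeastI_ex)
      qed
      have umono: "u \<beta> \<le> u \<beta>'" if "\<beta> \<le> \<beta>'" "\<beta>' < a" for \<beta> \<beta>'
      proof -
        have "u \<beta>' \<in> As \<and> \<beta> \<le> u \<beta>'" using up[OF that(2)] that(1) by auto
        thus ?thesis unfolding u_def by (rule Least_le)
      qed
      have uid: "u v = v" if "v \<in> As" for v
      proof -
        have "u v \<le> v" unfolding u_def by (rule Least_le) (use that in simp)
        moreover have "v \<le> u v" using up cofinal_lt[OF As that] by blast
        ultimately show ?thesis by simp
      qed
      define p where "p \<beta> = (SOME p. p < \<mu> \<and> (\<forall>j. p \<le> j \<and> j < \<mu> \<longrightarrow> f \<beta> j \<le> f (u \<beta>) j))" for \<beta>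
      have pp: "p \<beta> < \<mu> \<and> (\<forall>j. p \<beta> \<le> j \<and> j < \<mu> \<longrightarrow> f \<beta> j \<le> f (u \<beta>) j)" if "\<beta> < a" for \<beta>
      proof -
        have "\<exists>p. p < \<mu> \<and> (\<forall>j. p \<le> j \<and> j < \<mu> \<longrightarrow> f \<beta> j \<le> f (u \<beta>) j)"
        proof (cases "\<beta> = u \<beta>")
          case True
          thus ?thesis using z\<mu> by (metis order_refl)
        next
          case False
          hence "\<beta> < u \<beta>" using up[OF that] by auto
          moreover have "u \<beta> < k" using up[OF that] Ak by blast
          ultimately obtain i where "i < \<mu>" "\<forall>j. i \<le> j \<and> j < \<mu> \<longrightarrow> f \<beta> j < f (u \<beta>) j"
            using S5 by (meson less_trans)
          thus ?thesis by (meson less_imp_le)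
        qed
        thus ?thesis unfolding p_def by (rule someI_ex)
      qed
      have "\<forall>x\<in>B1. p x < cf l" using pp cofinal_lt[OF B1] \<mu>_def by blast
      from mismatch[OF Ll _ B1 this] cfa \<mu>_def
      obtain j1 X where j1: "j1 < \<mu>" and X: "X \<subseteq> B1" "cofinal_in X a" "\<forall>x\<in>X. p x \<le> j1" by blast
      define X2 where "X2 = {\<beta>\<in>X. \<exists>v\<in>As. v < \<beta> \<and> (\<forall>\<beta>'\<in>X. \<beta>' < \<beta> \<longrightarrow> \<beta>' \<le> v)}"
      have X2c: "cofinal_in X2 a" unfolding cofinal_in_def
      proof (intro conjI allI impI)
        show "X2 \<subseteq> seg a" unfolding X2_def using cofinal_lt[OF X(2)] by auto
      next
        fix x assume "x < a"
        then obtain v where v: "v \<in> As" "x \<le> v" using As unfolding cofinal_in_def by blast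
        have "v < a" using cofinal_lt[OF As v(1)] .
        then obtain y where "y < a" "v < y" using La unfolding is_limit_def by blast
        then obtain \<beta> where "\<beta> \<in> X" "y \<le> \<beta>" using X(2) unfolding cofinal_in_def by blast
        hence ex: "\<exists>\<beta>. \<beta> \<in> X \<and> v < \<beta>" using \<open>v < y\<close> by (meson less_le_trans)
        define \<beta>0 where "\<beta>0 = (LEAST \<beta>. \<beta> \<in> X \<and> v < \<beta>)"
        have b0: "\<beta>0 \<in> X \<and> v < \<beta>0" unfolding \<beta>0_def using ex by (rule LeastI_ex)
        have "\<forall>\<beta>'\<in>X. \<beta>' < \<beta>0 \<longrightarrow> \<beta>' \<le> v"
        proof (intro ballI impI)
          fix \<beta>' assume "\<beta>' \<in> X" and lt: "\<beta>' < \<beta>0"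
          have "\<not> (\<beta>' \<in> X \<and> v < \<beta>')" using lt unfolding \<beta>0_def by (rule not_less_Least)
          thus "\<beta>' \<le> v" using \<open>\<beta>' \<in> X\<close> by simp
        qed
        hence "\<beta>0 \<in> X2" unfolding X2_def using b0 v(1) by blast
        moreover have "x \<le> \<beta>0" using v(2) b0 by (meson less_imp_le order_trans)
        ultimately show "\<exists>y\<in>X2. x \<le> y" by blast
      qed
      define vv where "vv \<beta> = (SOME v. v \<in> As \<and> v < \<beta> \<and> (\<forall>\<beta>'\<in>X. \<beta>' < \<beta> \<longrightarrow> \<beta>' \<le> v))" for \<beta>
      have vvp: "vv \<beta> \<in> As \<and> vv \<beta> < \<beta> \<and> (\<forall>\<beta>'\<in>X. \<beta>' < \<beta> \<longrightarrow> \<beta>' \<le> vv \<beta>)" if "\<beta> \<in> X2" for \<beta>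
      proof -
        have "\<exists>v. v \<in> As \<and> v < \<beta> \<and> (\<forall>\<beta>'\<in>X. \<beta>' < \<beta> \<longrightarrow> \<beta>' \<le> v)" using that unfolding X2_def by blast
        thus ?thesis unfolding vv_def by (rule someI_ex)
      qed
      define q where "q \<beta> = (SOME q. q < \<mu> \<and> (\<forall>j. q \<le> j \<and> j < \<mu> \<longrightarrow> f (vv \<beta>) j < f \<beta> j))" for \<beta>
      have qp: "q \<beta> < \<mu> \<and> (\<forall>j. q \<beta> \<le> j \<and> j < \<mu> \<longrightarrow> f (vv \<beta>) j < f \<beta> j)" if "\<beta> \<in> X2" for \<beta>
      proof -
        have bk: "\<beta> < k" using cofinal_lt[OF X2c that] ak by simp
        have "vv \<beta> < \<beta>" using vvp[OF that] by blast
        hence "\<exists>q. q < \<mu> \<and> (\<forall>j. q \<le> j \<and> j < \<mu> \<longrightarrow> f (vv \<beta>) j < f \<beta> j)"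
          using S5 bk by (meson less_trans)
        thus ?thesis unfolding q_def by (rule someI_ex)
      qed
      have "\<forall>x\<in>X2. q x < cf l" using qp \<mu>_def by blast
      from mismatch[OF Ll _ X2c this] cfa \<mu>_def
      obtain j2 X3 where j2: "j2 < \<mu>" and X3: "X3 \<subseteq> X2" "cofinal_in X3 a" "\<forall>x\<in>X3. q x \<le> j2" by blast
      define \<eta> where "\<eta> = max i0 (max j1 j2)"
      have \<eta>: "\<eta> < \<mu>" "i0 \<le> \<eta>" "j1 \<le> \<eta>" "j2 \<le> \<eta>" unfolding \<eta>_def using i0 j1 j2 by (auto simp: le_max_iff_disj)
      have X2X: "X2 \<subseteq> X" unfolding X2_def by auto
      have key: "f y \<eta> < f x \<eta>" if x: "x \<in> X3" and y: "y \<in> X3" and yx: "y < x" for x y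
      proof -
        have xX2: "x \<in> X2" and yX: "y \<in> X" using x y X3(1) X2X by auto
        have ya: "y < a" using cofinal_lt[OF X(2) yX] .
        have "f y \<eta> \<le> f (u y) \<eta>" using pp[OF ya] X(3) yX \<eta> by (meson order_trans)
        also have "f (u y) \<eta> \<le> f (vv x) \<eta>"
        proof -
          have "y \<le> vv x" using vvp[OF xX2] yX yx by blast
          moreover have "vv x < a" using vvp[OF xX2] cofinal_lt[OF As] by blast
          ultimately have "u y \<le> u (vv x)" using umono by blast
          hence le: "u y \<le> vv x" using uid vvp[OF xX2] by simp
          show ?thesis
          proof (cases "u y = vv x")
            case True thus ?thesis by simp
          next
            case False
            hence "u y < vv x" using le by simp
            thus ?thesis using Inc up[OF ya] vvp[OF xX2] \<eta> by (meson less_imp_le)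
          qed
        qed
        also have "f (vv x) \<eta> < f x \<eta>" using qp[OF xX2] X3(3) x \<eta> by (meson order_trans)
        finally show ?thesis .
      qed
      show ?thesis
      proof (intro exI[of _ \<eta>] conjI)
        show "\<eta> < \<mu>" by (rule \<eta>(1))
        show "\<eta> < a" using \<eta>(1) ul la by simp
        have "inj_on (d \<eta>) X3"
        proof (rule inj_onI)
          fix x y assume x: "x \<in> X3" and y: "y \<in> X3" and eq: "d \<eta> x = d \<eta> y"
          have "x \<in> B1" "y \<in> B1" using x y X3(1) X2X X(1) by auto
          hence "\<not> x < l" "\<not> y < l" unfolding B1_def by auto
          hence eqf: "f x \<eta> = f y \<eta>" using eq unfolding d_def by simp
          show "x = y"
          proof (rule ccontr)
            assume "x \<noteq> y"
            then consider "y < x" | "x < y" by (meson linorder_neqE)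
            thus False
            proof cases
              case 1 thus False using key[OF x y] eqf by simp
            next
              case 2 thus False using key[OF y x] eqf by simp
            qed
          qed
        qed
        moreover have "X3 \<subseteq> B" using X3(1) X2X X(1) unfolding B1_def by auto
        ultimately show "\<exists>B'\<subseteq>B. cofinal_in B' a \<and> inj_on (d \<eta>) B'" using X3(2) by blast
      qed
    qed
    thus ?thesis unfolding A_set_def using ak by blast
  qed
  thus ?thesis using map \<mu>_def by blast
qed

lemma csucc_facts':
  assumes L: "infinite (seg l)" and K: "is_csucc l k"
  shows "l < k" "is_card k" "infinite (seg k)" "is_limit k" "\<And>c. c < k \<Longrightarrow> seg c \<lesssim> seg l"
    "seg l \<prec> seg k"
proof -
  show sm: "\<And>c. c < k \<Longrightarrow> seg c \<lesssim> seg l" using K unfolding is_csucc_def by blast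
  show lt: "seg l \<prec> seg k" using K unfolding is_csucc_def by blast
  show lk: "l < k"
  proof (rule ccontr)
    assume "\<not> l < k"
    hence "seg k \<lesssim> seg l" by (intro subset_imp_lepoll seg_mono) simp
    thus False using lt unfolding lesspoll_def using lepoll_antisym by blast
  qed
  show ck: "is_card k" unfolding is_card_def
  proof (intro allI impI notI)
    fix b assume "b < k" "seg b \<approx> seg k"
    hence "seg k \<lesssim> seg l" using sm eqpoll_sym lepoll_trans1 by blast
    thus False using lt unfolding lesspoll_def using lepoll_antisym by blast
  qed
  have "seg l \<subseteq> seg k" using lk by (intro seg_mono) simp
  thus ik: "infinite (seg k)" using L finite_subset by blast
  show "is_limit k" using card_infinite_limit[OF ck ik] .
qed

lemma omega_countable:
  assumes W: "is_omega w" shows "countable (seg w)"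
proof -
  have "inj_on (\<lambda>c. card (seg c)) (seg w)"
  proof (rule inj_onI)
    fix x y assume x: "x \<in> seg w" and y: "y \<in> seg w" and eq: "card (seg x) = card (seg y)"
    have fx: "finite (seg x)" and fy: "finite (seg y)" using W x y unfolding is_omega_def by auto
    show "x = y"
    proof (rule ccontr)
      assume "x \<noteq> y"
      then consider "x < y" | "y < x" by (meson linorder_neqE)
      thus False
      proof cases
        case 1
        hence "seg x \<subset> seg y" unfolding seg_def by auto
        hence "card (seg x) < card (seg y)" using psubset_card_mono[OF fy] by blast
        thus False using eq by simp
      next
        case 2
        hence "seg y \<subset> seg x" unfolding seg_def by auto
        hence "card (seg y) < card (seg x)" using psubset_card_mono[OF fx] by blast
        thus False using eq by simp
      qed
    qed
  qed
  thus ?thesis unfolding countable_def by blast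
qed

lemma part4:
  assumes M: "is_aleph_omega m" and K: "is_csucc m k" and W: "is_omega w" and A1: "is_csucc w a1"
    and CC: "chang k m a1" and D: "is_map d w k m"
  shows "stationary k (E_eq k a1 - A_set w k d)"
proof -
  have cw: "countable (seg w)" using omega_countable[OF W] .
  have iw: "infinite (seg w)" using W unfolding is_omega_def by simp
  have ca: "countable (seg c)" if "c < a1" for c
    using countable_lepoll[OF cw] A1 that unfolding is_csucc_def by blast
  have na: "\<not> countable (seg a1)"
  proof
    assume "countable (seg a1)"
    then obtain g :: "'a \<Rightarrow> nat" where "inj_on g (seg a1)" unfolding countable_def by blast
    hence "seg a1 \<lesssim> (UNIV :: nat set)" unfolding lepoll_def by blast
    also have "(UNIV :: nat set) \<lesssim> seg w" using iw infinite_le_lepoll by blast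
    finally have "seg a1 \<lesssim> seg w" .
    thus False using A1 unfolding is_csucc_def lesspoll_def using lepoll_antisym by blast
  qed
  have "infinite ({b. b < m \<and> inf_card b} - {w})" using M unfolding is_aleph_omega_def by simp
  then obtain bb where bb: "bb < m" "inf_card bb" "bb \<noteq> w" using infinite_imp_nonempty by blast
  have a1bb: "a1 \<le> bb"
  proof (rule ccontr)
    assume "\<not> a1 \<le> bb"
    hence "bb < a1" by simp
    hence s1: "seg bb \<lesssim> seg w" using A1 unfolding is_csucc_def by blast
    have "\<not> bb < w" using W bb(2) unfolding is_omega_def inf_card_def by blast
    hence wb: "w < bb" using bb(3) by simp
    hence "seg w \<lesssim> seg bb" by (intro subset_imp_lepoll seg_mono) simp
    hence "seg w \<approx> seg bb" using s1 lepoll_antisym by blast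
    thus False using bb(2) wb unfolding inf_card_def is_card_def by blast
  qed
  have am: "a1 \<le> m" using a1bb bb(1) by simp
  have "seg bb \<subseteq> seg m" using bb(1) by (intro seg_mono) simp
  hence im: "infinite (seg m)" using bb(2) finite_subset unfolding inf_card_def by blast
  note KF = csucc_facts'[OF im K]
  have mk: "m < k" using KF(1) .
  have Lk: "is_limit k" using KF(4) .
  have "\<exists>f. inj_on f (seg y) \<and> f ` seg y \<subseteq> seg m" if "y < k" for y
    using KF(5)[OF that] unfolding lepoll_def by blast
  then obtain \<iota> where \<iota>: "\<And>y. y < k \<Longrightarrow> inj_on (\<iota> y) (seg y) \<and> \<iota> y ` seg y \<subseteq> seg m" by metis
  have bk: "bot0 < k" using mk bot0_less by blast
  define en where "en = from_nat_into (seg w)"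
  have wne: "seg w \<noteq> {}" using iw by auto
  have en: "\<And>n. en n < w" unfolding en_def using from_nat_into[OF wne] by simp
  have ensurj: "\<And>\<eta>. \<eta> < w \<Longrightarrow> \<exists>n. en n = \<eta>" unfolding en_def using from_nat_into_surj[OF cw] by simp
  show ?thesis unfolding stationary_def
  proof (intro conjI allI impI)
    show "E_eq k a1 - A_set w k d \<subseteq> seg k" unfolding E_eq_def seg_def by blast
  next
    fix C assume club: "club k C"
    have Cc: "cofinal_in C k" using club unfolding club_def by blast
    have "\<exists>y. y \<in> C \<and> x < y" if xk: "x < k" for x
    proof -
      obtain x' where x': "x' < k" "x < x'" using Lk xk unfolding is_limit_def by blast
      have "\<exists>y\<in>C. x' \<le> y" using Cc x'(1) unfolding cofinal_in_def by simp
      then obtain y where "y \<in> C" "x' \<le> y" by blast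
      thus ?thesis using x'(2) by (meson less_le_trans)
    qed
    hence "\<forall>x. \<exists>y. x < k \<longrightarrow> y \<in> C \<and> x < y" by blast
    then obtain nx where nx': "\<forall>x. x < k \<longrightarrow> nx x \<in> C \<and> x < nx x" using choice[of "\<lambda>x y. x < k \<longrightarrow> y \<in> C \<and> x < y"] by blast
    have nx: "\<And>x. x < k \<Longrightarrow> nx x \<in> C \<and> x < nx x" using nx' by blast
    have nxk: "\<And>x. x < k \<Longrightarrow> nx x < k" using nx cofinal_lt[OF Cc] by blast
    define raw where "raw n xs = (if n = 0 \<and> length xs = 1 then nx (hd xs)
        else if n = 1 \<and> length xs = 2 then \<iota> (xs!0) (xs!1)
        else if 2 \<le> n \<and> length xs = 1 then d (en (n-2)) (hd xs) else bot0)" for n :: nat and xs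
    define Fs where "Fs n xs = (if raw n xs < k then raw n xs else bot0)" for n xs
    have "seg k \<noteq> {}" using bk by auto
    moreover have "\<forall>n xs. set xs \<subseteq> seg k \<longrightarrow> Fs n xs \<in> seg k"
    proof (intro allI impI)
      fix n xs show "Fs n xs \<in> seg k" unfolding Fs_def using bk by simp
    qed
    ultimately have str: "is_structure (seg k) Fs" unfolding is_structure_def by blast
    obtain Mo where Mo: "elem_sub Mo (seg k) Fs (\<lambda>_ _. False)" "Mo \<approx> seg a1" "countable (Mo \<inter> seg m)"
      using CC[unfolded chang_def, rule_format, of Fs "\<lambda>_ _. False", OF str] by blast
    have Msub: "Mo \<subseteq> seg k" and Mstr: "is_structure Mo Fs" using Mo(1) unfolding elem_sub_def by blast+
    have Mk: "\<And>x. x \<in> Mo \<Longrightarrow> x < k" using Msub by auto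
    have Mne: "Mo \<noteq> {}" and Mcl: "\<And>n xs. set xs \<subseteq> Mo \<Longrightarrow> Fs n xs \<in> Mo"
      using Mstr unfolding is_structure_def by blast+
    have c1: "nx x \<in> Mo" if "x \<in> Mo" for x
    proof -
      have "Fs 0 [x] = nx x" unfolding Fs_def raw_def using nxk Mk that by simp
      thus ?thesis using Mcl[of "[x]" 0] that by simp
    qed
    have c2: "\<iota> y x \<in> Mo" if "y \<in> Mo" "x \<in> Mo" "x < y" for x y
    proof -
      have "\<iota> y x < m" using \<iota>[OF Mk[OF that(1)]] that(3) by (auto simp: image_subset_iff)
      hence "\<iota> y x < k" using mk less_trans by blast
      hence "Fs 1 [y, x] = \<iota> y x" unfolding Fs_def raw_def by simp
      thus ?thesis using Mcl[of "[y, x]" 1] that by simp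
    qed
    have c3: "d \<eta> \<beta> \<in> Mo \<and> d \<eta> \<beta> < m" if b\<eta>: "\<beta> \<in> Mo" "\<eta> < w" for \<eta> \<beta>
    proof -
      obtain n where n: "en n = \<eta>" using ensurj b\<eta>(2) by blast
      have dm: "d \<eta> \<beta> < m" using D b\<eta> Mk unfolding is_map_def by blast
      hence "d \<eta> \<beta> < k" using mk less_trans by blast
      hence "Fs (n+2) [\<beta>] = d \<eta> \<beta>" unfolding Fs_def raw_def using n by simp
      thus ?thesis using Mcl[of "[\<beta>]" "n+2"] b\<eta> dm by simp
    qed
    have M1: "countable (Mo \<inter> seg y)" if y: "y \<in> Mo" for y
    proof -
      have "\<iota> y ` (Mo \<inter> seg y) \<subseteq> Mo \<inter> seg m"
      proof
        fix v assume "v \<in> \<iota> y ` (Mo \<inter> seg y)"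
        then obtain x where x: "x \<in> Mo" "x < y" "v = \<iota> y x" by auto
        have "\<iota> y x \<in> Mo" using c2[OF y x(1) x(2)] .
        moreover have "\<iota> y x < m" using \<iota>[OF Mk[OF y]] x(2) by (auto simp: image_subset_iff)
        ultimately show "v \<in> Mo \<inter> seg m" using x(3) by simp
      qed
      hence "countable (\<iota> y ` (Mo \<inter> seg y))" using Mo(3) by (rule countable_subset)
      moreover have "inj_on (\<iota> y) (Mo \<inter> seg y)" by (rule inj_on_subset[OF conjunct1[OF \<iota>[OF Mk[OF y]]]]) blast
      ultimately show ?thesis by (rule countable_image_inj_on)
    qed
    have M2: "\<not> countable Mo"
    proof
      assume "countable Mo"
      hence "countable (seg a1)" using countable_eqpoll[OF _ eqpoll_sym[OF Mo(2)]] by blast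
      thus False using na by simp
    qed
    have M3: "\<exists>x0<k. \<forall>y\<in>Mo. y < x0"
    proof (rule ccontr)
      assume N: "\<not> ?thesis"
      have "\<exists>y. y \<in> Mo \<and> x < y" if xk: "x < k" for x
      proof -
        obtain x' where x': "x' < k" "x < x'" using Lk xk unfolding is_limit_def by blast
        have "\<not> (\<forall>y\<in>Mo. y < x')" using N x'(1) by blast
        then obtain y where "y \<in> Mo" "\<not> y < x'" by blast
        thus ?thesis using x'(2) by (meson leI less_le_trans)
      qed
      then obtain Y where Y: "\<And>x. x < k \<Longrightarrow> Y x \<in> Mo \<and> x < Y x" by metis
      have "inj_on (\<lambda>x. (Y x, \<iota> (Y x) x)) (seg k)"
      proof (rule inj_onI)
        fix x x' assume x: "x \<in> seg k" and x': "x' \<in> seg k" and eq: "(Y x, \<iota> (Y x) x) = (Y x', \<iota> (Y x') x')"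
        hence YY: "Y x = Y x'" and ii: "\<iota> (Y x) x = \<iota> (Y x) x'" by auto
        have "x < Y x" using Y x by simp
        moreover have "x' < Y x'" using Y x' by simp
        ultimately have "x \<in> seg (Y x)" "x' \<in> seg (Y x)" using YY by auto
        moreover have "inj_on (\<iota> (Y x)) (seg (Y x))" using \<iota> Mk Y x by auto
        ultimately show "x = x'" using ii inj_onD by metis
      qed
      moreover have "(\<lambda>x. (Y x, \<iota> (Y x) x)) ` seg k \<subseteq> Mo \<times> seg m"
        using Y \<iota> Mk by (auto simp: image_subset_iff)
      ultimately have "seg k \<lesssim> Mo \<times> seg m" unfolding lepoll_def by blast
      also have "Mo \<times> seg m \<lesssim> seg m \<times> seg m"
      proof (rule times_lepoll_mono)
        have "Mo \<lesssim> seg a1" using Mo(2) eqpoll_imp_lepoll by blast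
        also have "seg a1 \<lesssim> seg m" using am by (intro subset_imp_lepoll seg_mono)
        finally show "Mo \<lesssim> seg m" .
      qed simp
      also have "seg m \<times> seg m \<lesssim> seg m"
      proof -
        have "\<exists>f. bij_betw f (seg m \<times> seg m) (seg m)"
          using card_of_Times_same_infinite[OF im] card_of_ordIso by blast
        thus ?thesis unfolding eqpoll_def[symmetric] by (rule eqpoll_imp_lepoll)
      qed
      finally have "seg k \<lesssim> seg m" .
      thus False using KF(6) unfolding lesspoll_def using lepoll_antisym by blast
    qed
    then obtain x0 where x0: "x0 < k" "\<forall>y\<in>Mo. y < x0" by blast
    define \<alpha> where "\<alpha> = (LEAST \<alpha>. \<forall>y\<in>Mo. y < \<alpha>)"
    have \<alpha>M: "\<forall>y\<in>Mo. y < \<alpha>" unfolding \<alpha>_def using x0(2) by (rule LeastI)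
    have \<alpha>k: "\<alpha> < k" using Least_le[of "\<lambda>\<alpha>. \<forall>y\<in>Mo. y < \<alpha>" x0] x0 unfolding \<alpha>_def[symmetric] by simp
    have above: "\<exists>y\<in>Mo. x \<le> y" if "x < \<alpha>" for x
    proof -
      have "\<not> (\<forall>y\<in>Mo. y < x)" using that unfolding \<alpha>_def by (rule not_less_Least)
      thus ?thesis by (auto simp: not_less)
    qed
    have M4: "cofinal_in Mo \<alpha>" unfolding cofinal_in_def using \<alpha>M above by auto
    have M5: "\<not> countable B" if B: "cofinal_in B \<alpha>" for B
    proof
      assume cB: "countable B"
      have "\<exists>y. y \<in> Mo \<and> b \<le> y" if "b \<in> B" for b using above cofinal_lt[OF B that] by blast
      then obtain s where s: "\<And>b. b \<in> B \<Longrightarrow> s b \<in> Mo \<and> b \<le> s b" by metis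
      have "Mo \<subseteq> (\<Union>b\<in>B. insert (s b) (Mo \<inter> seg (s b)))"
      proof
        fix y assume y: "y \<in> Mo"
        then obtain b where b: "b \<in> B" "y \<le> b" using B \<alpha>M unfolding cofinal_in_def by blast
        hence "y \<le> s b" using s by (meson order_trans)
        hence "y \<in> insert (s b) (Mo \<inter> seg (s b))" using y by (auto simp: le_less)
        thus "y \<in> (\<Union>b\<in>B. insert (s b) (Mo \<inter> seg (s b)))" using b by blast
      qed
      moreover have "countable (\<Union>b\<in>B. insert (s b) (Mo \<inter> seg (s b)))"
        using cB M1 s by (intro countable_UN) auto
      ultimately show False using M2 countable_subset by blast
    qed
    have M6: "is_limit \<alpha>" unfolding is_limit_def
    proof (intro conjI allI impI)
      obtain y where "y \<in> Mo" using Mne by blast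
      thus "\<exists>x. x < \<alpha>" using \<alpha>M by blast
    next
      fix x assume "x < \<alpha>"
      then obtain y where y: "y \<in> Mo" "x \<le> y" using above by blast
      have "\<exists>y'\<in>Mo. y < y'"
      proof (rule ccontr)
        assume "\<not> ?thesis"
        hence "Mo \<subseteq> insert y (Mo \<inter> seg y)" by (auto simp: not_less le_less)
        moreover have "countable (insert y (Mo \<inter> seg y))" using M1[OF y(1)] by simp
        ultimately show False using M2 countable_subset by blast
      qed
      then obtain y' where "y' \<in> Mo" "y < y'" by blast
      thus "\<exists>y<\<alpha>. x < y" using \<alpha>M y(2) by (meson le_less_trans)
    qed
    have M7: "cf \<alpha> = a1"
    proof -
      have le: "cf \<alpha> \<le> a1" unfolding cf_def by (rule Least_le) (use M4 Mo(2) in blast)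
      have "\<not> cf \<alpha> < a1"
      proof
        assume "cf \<alpha> < a1"
        obtain B where B: "cofinal_in B \<alpha>" "B \<approx> seg (cf \<alpha>)" using cf_ex by blast
        have "countable B" using countable_eqpoll[OF ca[OF \<open>cf \<alpha> < a1\<close>] B(2)] .
        thus False using M5[OF B(1)] by simp
      qed
      thus ?thesis using le by simp
    qed
    have M8: "\<alpha> \<in> C"
    proof -
      have "cofinal_in (C \<inter> seg \<alpha>) \<alpha>" unfolding cofinal_in_def
      proof (intro conjI allI impI)
        show "C \<inter> seg \<alpha> \<subseteq> seg \<alpha>" by blast
      next
        fix x assume "x < \<alpha>"
        then obtain y where y: "y \<in> Mo" "x \<le> y" using above by blast
        have "nx y \<in> Mo" using c1 y(1) .
        hence "nx y < \<alpha>" using \<alpha>M by blast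
        moreover have "nx y \<in> C \<and> y < nx y" using nx Mk y(1) by blast
        ultimately show "\<exists>y\<in>C \<inter> seg \<alpha>. x \<le> y" using y(2) by (meson IntI le_less_trans less_imp_le seg_iff)
      qed
      thus ?thesis using club \<alpha>k M6 unfolding club_def by blast
    qed
    have M9: "\<alpha> \<notin> A_set w k d"
    proof
      assume "\<alpha> \<in> A_set w k d"
      then obtain \<eta> B' where \<eta>: "\<eta> < w" and B': "B' \<subseteq> Mo" "cofinal_in B' \<alpha>" "inj_on (d \<eta>) B'"
        using M4 unfolding A_set_def by blast
      have "d \<eta> ` B' \<subseteq> Mo \<inter> seg m" using c3 B'(1) \<eta> by auto
      hence "countable (d \<eta> ` B')" using Mo(3) countable_subset by blast
      hence "countable B'" using B'(3) by (rule countable_image_inj_on)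
      thus False using M5[OF B'(2)] by simp
    qed
    have "\<alpha> \<in> E_eq k a1" unfolding E_eq_def using \<alpha>k M6 M7 by simp
    thus "(E_eq k a1 - A_set w k d) \<inter> C \<noteq> {}" using M8 M9 by blast
  qed
qed

theorem proposition3p6:
  fixes dummy :: "'o::wellorder"
  shows "(\<forall>(l::'o) k. inf_card l \<and> is_csucc l k \<longrightarrow>
            (\<exists>d. is_map d (cf l) k l \<and> E_less k (cf l) \<subseteq> A_set (cf l) k d)
          \<and> (ADS l k \<longrightarrow>
            (\<exists>d. is_map d (cf l) k l \<and> E_neq k (cf l) \<subseteq> A_set (cf l) k d))
          \<and> (\<forall>f. singular_card l \<and> is_scale l k f \<longrightarrow>
            (\<exists>d. is_map d (cf l) k l \<and> G_set l k f \<subseteq> A_set (cf l) k d)))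
     \<and> (\<forall>(m::'o) k w a1. is_aleph_omega m \<and> is_csucc m k \<and> is_omega w \<and> is_csucc w a1
          \<and> chang k m a1 \<longrightarrow>
            (\<forall>d. is_map d w k m \<longrightarrow> stationary k (E_eq k a1 - A_set w k d)))"
proof (rule conjI)
  show "\<forall>(l::'o) k. inf_card l \<and> is_csucc l k \<longrightarrow>
            (\<exists>d. is_map d (cf l) k l \<and> E_less k (cf l) \<subseteq> A_set (cf l) k d)
          \<and> (ADS l k \<longrightarrow>
            (\<exists>d. is_map d (cf l) k l \<and> E_neq k (cf l) \<subseteq> A_set (cf l) k d))
          \<and> (\<forall>f. singular_card l \<and> is_scale l k f \<longrightarrow>
            (\<exists>d. is_map d (cf l) k l \<and> G_set l k f \<subseteq> A_set (cf l) k d))"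
  proof (intro allI impI)
    fix l k :: 'o
    assume H: "inf_card l \<and> is_csucc l k"
    have L: "inf_card l" and K: "is_csucc l k" using H by simp_all
    have P1: "\<exists>d. is_map d (cf l) k l \<and> E_less k (cf l) \<subseteq> A_set (cf l) k d" by (rule part1[OF L K])
    have P2: "ADS l k \<longrightarrow> (\<exists>d. is_map d (cf l) k l \<and> E_neq k (cf l) \<subseteq> A_set (cf l) k d)"
    proof
      assume "ADS l k" thus "\<exists>d. is_map d (cf l) k l \<and> E_neq k (cf l) \<subseteq> A_set (cf l) k d" by (rule part2[OF L K])
    qed
    have P3: "\<forall>f. singular_card l \<and> is_scale l k f \<longrightarrow>
            (\<exists>d. is_map d (cf l) k l \<and> G_set l k f \<subseteq> A_set (cf l) k d)"
    proof (intro allI impI)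
      fix f assume "singular_card l \<and> is_scale l k f"
      hence "is_scale l k f" by simp
      thus "\<exists>d. is_map d (cf l) k l \<and> G_set l k f \<subseteq> A_set (cf l) k d" by (rule part3[OF L K])
    qed
    show "(\<exists>d. is_map d (cf l) k l \<and> E_less k (cf l) \<subseteq> A_set (cf l) k d)
          \<and> (ADS l k \<longrightarrow>
            (\<exists>d. is_map d (cf l) k l \<and> E_neq k (cf l) \<subseteq> A_set (cf l) k d))
          \<and> (\<forall>f. singular_card l \<and> is_scale l k f \<longrightarrow>
            (\<exists>d. is_map d (cf l) k l \<and> G_set l k f \<subseteq> A_set (cf l) k d))"
      using P1 P2 P3 by (intro conjI)
  qed
next
  show "\<forall>(m::'o) k w a1. is_aleph_omega m \<and> is_csucc m k \<and> is_omega w \<and> is_csucc w a1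
          \<and> chang k m a1 \<longrightarrow>
            (\<forall>d. is_map d w k m \<longrightarrow> stationary k (E_eq k a1 - A_set w k d))"
  proof (intro allI impI)
    fix m k w a1 :: 'o and d
    assume H: "is_aleph_omega m \<and> is_csucc m k \<and> is_omega w \<and> is_csucc w a1 \<and> chang k m a1"
      and D: "is_map d w k m"
    show "stationary k (E_eq k a1 - A_set w k d)"
      by (rule part4) (use H D in simp_all)
  qed
qed

end
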